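(* For every $\delta\in\mathbb N$, there exist $\varepsilon > 0$ and a blowup $H$ of a 7-cycle with minimum degree at least $\delta$ such that $\sum_{v\in V(H)}1/(d(v) + \varepsilon) > 3$.
   Context: A blowup of a graph $F$ is a graph obtained from $F$ by replacing some vertices with cliques and replacing each edge by the complete bipartite graph between the corresponding vertex sets (i.e., vertices $x$ of $F$ are replaced by pairwise disjoint nonempty cliques $Q_x$, and for each edge $xy$ of $F$ every vertex of $Q_x$ is adjacent to every vertex of $Q_y$, with no other edges). $d(v)$ is the degree of $v$ in $H$. *)

theory Defs
  imports Complex_Main
begin

definition simple_graph :: "'a set \<Rightarrow> ('a \<Rightarrow> 'a \<Rightarrow> bool) \<Rightarrow> bool" where
  "simple_graph V E \<longleftrightarrow> finite V \<and> (\<forall>u v. E u v \<longrightarrow> u \<in> V \<and> v \<in> V \<and> u \<noteq> v \<and> E v u)"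

definition degree :: "'a set \<Rightarrow> ('a \<Rightarrow> 'a \<Rightarrow> bool) \<Rightarrow> 'a \<Rightarrow> nat" where
  "degree V E v = card {u \<in> V. E v u}"

definition is_blowup :: "'b set \<Rightarrow> ('b \<Rightarrow> 'b \<Rightarrow> bool) \<Rightarrow> 'a set \<Rightarrow> ('a \<Rightarrow> 'a \<Rightarrow> bool) \<Rightarrow> bool" where
  "is_blowup VF EF VH EH \<longleftrightarrow> simple_graph VH EH \<and>
     (\<exists>q. q ` VH = VF \<and>
        (\<forall>u\<in>VH. \<forall>v\<in>VH. u \<noteq> v \<longrightarrow> (EH u v \<longleftrightarrow> (q u = q v \<or> EF (q u) (q v)))))"

definition C7_V :: "nat set" where "C7_V = {0..<7}"
definition C7_E :: "nat \<Rightarrow> nat \<Rightarrow> bool" where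
  "C7_E i j \<longleftrightarrow> i < 7 \<and> j < 7 \<and> ((i + 1) mod 7 = j \<or> (j + 1) mod 7 = i)"

end

theory Submission
  imports Defs
begin
lemma c7e_simps:
  "C7_E i j \<longleftrightarrow> (i = 0 \<and> j = 1) \<or> (i = 1 \<and> j = 2) \<or> (i = 2 \<and> j = 3) \<or> (i = 3 \<and> j = 4)
     \<or> (i = 4 \<and> j = 5) \<or> (i = 5 \<and> j = 6) \<or> (i = 6 \<and> j = 0)
     \<or> (j = 0 \<and> i = 1) \<or> (j = 1 \<and> i = 2) \<or> (j = 2 \<and> i = 3) \<or> (j = 3 \<and> i = 4)
     \<or> (j = 4 \<and> i = 5) \<or> (j = 5 \<and> i = 6) \<or> (j = 6 \<and> i = 0)"
proof (cases "i < 7 \<and> j < 7")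
  case True
  then have i: "i = 0 \<or> i = 1 \<or> i = 2 \<or> i = 3 \<or> i = 4 \<or> i = 5 \<or> i = 6"
    and j: "j = 0 \<or> j = 1 \<or> j = 2 \<or> j = 3 \<or> j = 4 \<or> j = 5 \<or> j = 6" by auto
  show ?thesis using i j unfolding C7_E_def by (elim disjE) simp_all
next
  case False then show ?thesis unfolding C7_E_def by auto
qed
definition qq :: "nat \<Rightarrow> nat \<Rightarrow> nat" where
  "qq N v = (if v < N then 0 else if v < 2*N then 2 else if v < 3*N then 4
     else if v = 3*N then 1 else if v = 3*N+1 then 3 else if v = 3*N+2 then 5 else 6)"

definition VV :: "nat \<Rightarrow> nat set" where "VV N = {0..<3*N+4}"

definition EE :: "nat \<Rightarrow> nat \<Rightarrow> nat \<Rightarrow> bool" where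
  "EE N u v \<longleftrightarrow> u \<in> VV N \<and> v \<in> VV N \<and> u \<noteq> v \<and> (qq N u = qq N v \<or> C7_E (qq N u) (qq N v))"

lemma c7_sym: "C7_E i j \<Longrightarrow> C7_E j i" unfolding C7_E_def by auto

lemma sg: "simple_graph (VV N) (EE N)"
    unfolding simple_graph_def EE_def VV_def using c7_sym by auto

lemma qq_cases: assumes "u < 3*N+4"
  shows "(u < N \<and> qq N u = 0) \<or> (N \<le> u \<and> u < 2*N \<and> qq N u = 2) \<or> (2*N \<le> u \<and> u < 3*N \<and> qq N u = 4)
    \<or> (u = 3*N \<and> qq N u = 1) \<or> (u = 3*N+1 \<and> qq N u = 3) \<or> (u = 3*N+2 \<and> qq N u = 5) \<or> (u = 3*N+3 \<and> qq N u = 6)"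
  using assms unfolding qq_def by auto

lemma blow: assumes "N \<ge> 1" shows "is_blowup C7_V C7_E (VV N) (EE N)"
proof -
  have "qq N ` VV N \<subseteq> C7_V" unfolding qq_def VV_def C7_V_def by auto
  moreover have "C7_V \<subseteq> qq N ` VV N"
  proof
    fix x assume "x \<in> C7_V"
    then have "x \<in> {0,1,2,3,4,5,6}" unfolding C7_V_def by auto
    moreover have "qq N 0 = 0" "qq N N = 2" "qq N (2*N) = 4" "qq N (3*N) = 1"
      "qq N (3*N+1) = 3" "qq N (3*N+2) = 5" "qq N (3*N+3) = 6"
      using assms unfolding qq_def by auto
    moreover have "{0, N, 2*N, 3*N, 3*N+1, 3*N+2, 3*N+3} \<subseteq> VV N" unfolding VV_def by auto
    ultimately show "x \<in> qq N ` VV N" by (metis empty_iff image_eqI insert_iff insert_subset)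
  qed
  ultimately show ?thesis unfolding is_blowup_def using sg
    by (intro conjI exI[of _ "qq N"]) (auto simp: EE_def)
qed

lemma deg0: assumes "v < N" shows "{u \<in> VV N. EE N v u} = ({0..<N} - {v}) \<union> {3*N, 3*N+3}"
proof (rule set_eqI)
  fix u
  have qv: "qq N v = 0" using assms unfolding qq_def by auto
  show "u \<in> {u \<in> VV N. EE N v u} \<longleftrightarrow> u \<in> ({0..<N} - {v}) \<union> {3*N, 3*N+3}"
  proof (cases "u < 3*N+4")
    case True
    show ?thesis using qq_cases[OF True] assms unfolding EE_def VV_def qv
      by (elim disjE) (auto simp: C7_E_def)
  qed (use assms in \<open>auto simp: VV_def\<close>)
qed
lemma deg2: assumes "N \<le> v" "v < 2*N" shows "{u \<in> VV N. EE N v u} = ({N..<2*N} - {v}) \<union> {3*N, 3*N+1}"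
proof (rule set_eqI)
  fix u
  have qv: "qq N v = 2" using assms unfolding qq_def by auto
  show "u \<in> {u \<in> VV N. EE N v u} \<longleftrightarrow> u \<in> ({N..<2*N} - {v}) \<union> {3*N, 3*N+1}"
  proof (cases "u < 3*N+4")
    case True
    show ?thesis using qq_cases[OF True] assms unfolding EE_def VV_def qv
      by (elim disjE) (auto simp: C7_E_def)
  qed (use assms in \<open>auto simp: VV_def\<close>)
qed
lemma deg4: assumes "2*N \<le> v" "v < 3*N" shows "{u \<in> VV N. EE N v u} = ({2*N..<3*N} - {v}) \<union> {3*N+1, 3*N+2}"
proof (rule set_eqI)
  fix u
  have qv: "qq N v = 4" using assms unfolding qq_def by auto
  show "u \<in> {u \<in> VV N. EE N v u} \<longleftrightarrow> u \<in> ({2*N..<3*N} - {v}) \<union> {3*N+1, 3*N+2}"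
  proof (cases "u < 3*N+4")
    case True
    show ?thesis using qq_cases[OF True] assms unfolding EE_def VV_def qv
      by (elim disjE) (auto simp: C7_E_def)
  qed (use assms in \<open>auto simp: VV_def\<close>)
qed
lemma deg1: assumes "N \<ge> 0" shows "{u \<in> VV N. EE N (3*N) u} = {0..<2*N}"
proof (rule set_eqI)
  fix u
  have qv: "qq N (3*N) = 1" using assms unfolding qq_def by auto
  show "u \<in> {u \<in> VV N. EE N (3*N) u} \<longleftrightarrow> u \<in> {0..<2*N}"
  proof (cases "u < 3*N+4")
    case True
    show ?thesis using qq_cases[OF True] assms unfolding EE_def VV_def qv
      by (elim disjE) (auto simp: C7_E_def)
  qed (use assms in \<open>auto simp: VV_def\<close>)
qed
lemma deg3: assumes "N \<ge> 0" shows "{u \<in> VV N. EE N (3*N+1) u} = {N..<3*N}"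
proof (rule set_eqI)
  fix u
  have qv: "qq N (3*N+1) = 3" using assms unfolding qq_def by auto
  show "u \<in> {u \<in> VV N. EE N (3*N+1) u} \<longleftrightarrow> u \<in> {N..<3*N}"
  proof (cases "u < 3*N+4")
    case True
    show ?thesis using qq_cases[OF True] assms unfolding EE_def VV_def qv
      by (elim disjE) (auto simp: C7_E_def)
  qed (use assms in \<open>auto simp: VV_def\<close>)
qed
lemma deg5: assumes "N \<ge> 0" shows "{u \<in> VV N. EE N (3*N+2) u} = {2*N..<3*N} \<union> {3*N+3}"
proof (rule set_eqI)
  fix u
  have qv: "qq N (3*N+2) = 5" using assms unfolding qq_def by auto
  show "u \<in> {u \<in> VV N. EE N (3*N+2) u} \<longleftrightarrow> u \<in> {2*N..<3*N} \<union> {3*N+3}"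
  proof (cases "u < 3*N+4")
    case True
    show ?thesis using qq_cases[OF True] assms unfolding EE_def VV_def qv
      by (elim disjE) (auto simp: C7_E_def)
  qed (use assms in \<open>auto simp: VV_def\<close>)
qed
lemma deg6: assumes "N \<ge> 0" shows "{u \<in> VV N. EE N (3*N+3) u} = {0..<N} \<union> {3*N+2}"
proof (rule set_eqI)
  fix u
  have qv: "qq N (3*N+3) = 6" using assms unfolding qq_def by auto
  show "u \<in> {u \<in> VV N. EE N (3*N+3) u} \<longleftrightarrow> u \<in> {0..<N} \<union> {3*N+2}"
  proof (cases "u < 3*N+4")
    case True
    show ?thesis using qq_cases[OF True] assms unfolding EE_def VV_def qv
      by (elim disjE) (auto simp: C7_E_def)
  qed (use assms in \<open>auto simp: VV_def\<close>)
qed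

lemma degA: assumes "N \<ge> 1" "v < 3*N" shows "degree (VV N) (EE N) v = N+1"
proof -
  consider "v < N" | "N \<le> v" "v < 2*N" | "2*N \<le> v" "v < 3*N" using assms by linarith
  then show ?thesis
  proof cases
    case 1 then show ?thesis unfolding degree_def deg0[OF 1] using assms by (simp add: card_insert_if)
  next
    case 2 then show ?thesis unfolding degree_def deg2[OF 2] using assms by (simp add: card_insert_if)
  next
    case 3 then show ?thesis unfolding degree_def deg4[OF 3] using assms by (simp add: card_insert_if)
  qed
qed

lemma degs: "degree (VV N) (EE N) (3*N) = 2*N" "degree (VV N) (EE N) (3*N+1) = 2*N"
   "degree (VV N) (EE N) (3*N+2) = N+1" "degree (VV N) (EE N) (3*N+3) = N+1"
  unfolding degree_def deg1[OF le0] deg3[OF le0] deg5[OF le0] deg6[OF le0] by (simp_all add: card_insert_if)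

lemma ineq: fixes x e :: real assumes "x \<ge> 1" "e = 1/(6*x+6)"
  shows "(3*x+2)/(x+1+e) + 2/(2*x+e) > 3"
proof -
  have p: "6*x+6 > 0" using assms by simp
  have ep: "e > 0" using p assms(2) by simp
  have ee: "e * (6*x+6) = 1" using p assms(2) by simp
  have ex: "e * x \<ge> e * 1" using mult_left_mono[OF assms(1), of e] ep by simp
  have ee2: "e*6 + (e*x)*6 = 1" using ee by (simp add: algebra_simps)
  have m: "6*x*e = (e*x)*6" by simp
  have e0: "e > 0" "e < 1/3" "6*x*e < 1" using ep ee2 ex m by linarith+
  have id: "(3*x+2)*(2*x+e) + 2*(x+1+e) - 3*((x+1+e)*(2*x+e)) = 2 - 6*x*e + e*(1 - 3*e)"
    by (simp add: algebra_simps)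
  have "e*(1-3*e) > 0" using e0 by simp
  then have lt: "3*((x+1+e)*(2*x+e)) < (3*x+2)*(2*x+e) + 2*(x+1+e)" using id e0 by linarith
  have d1: "x+1+e > 0" and d2: "2*x+e > 0" using e0 assms(1) by auto
  have "(3*x+2)/(x+1+e) + 2/(2*x+e) = ((3*x+2)*(2*x+e) + 2*(x+1+e))/((x+1+e)*(2*x+e))"
    using d1 d2 by (simp add: field_simps)
  also have "\<dots> > 3" using lt d1 d2 by (simp add: less_divide_eq)
  finally show ?thesis .
qed

theorem proposition4p3:
  fixes \<delta> :: nat
  shows "\<exists>\<epsilon>::real. \<epsilon> > 0 \<and>
    (\<exists>(V::nat set) E. is_blowup C7_V C7_E V E \<and>
       (\<forall>v\<in>V. degree V E v \<ge> \<delta>) \<and>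
       (\<Sum>v\<in>V. 1 / (real (degree V E v) + \<epsilon>)) > 3)"
proof -
  define N where "N = \<delta> + 1"
  define e :: real where "e = 1/(6*real N+6)"
  have N1: "N \<ge> 1" unfolding N_def by simp
  have e0: "e > 0" unfolding e_def by simp
  have Vs: "VV N = {0..<3*N} \<union> {3*N, 3*N+1, 3*N+2, 3*N+3}" unfolding VV_def by auto
  have mind: "\<forall>v\<in>VV N. degree (VV N) (EE N) v \<ge> \<delta>"
  proof
    fix v assume "v \<in> VV N"
    then have "v < 3*N \<or> v = 3*N \<or> v = 3*N+1 \<or> v = 3*N+2 \<or> v = 3*N+3" unfolding VV_def by auto
    moreover have "N \<ge> \<delta>" unfolding N_def by simp
    ultimately show "degree (VV N) (EE N) v \<ge> \<delta>" using degA[OF N1] degs[of N] by auto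
  qed
  have s1: "(\<Sum>v\<in>{0..<3*N}. 1 / (real (degree (VV N) (EE N) v) + e)) = 3*N / (real N + 1 + e)"
    using degA[OF N1] by (simp add: sum.cong)
  define f where "f v = 1 / (real (degree (VV N) (EE N) v) + e)" for v
  have "(\<Sum>v\<in>VV N. 1 / (real (degree (VV N) (EE N) v) + e)) = sum f (VV N)" unfolding f_def by simp
  also have "\<dots> = sum f {0..<3*N} + sum f {3*N, 3*N+1, 3*N+2, 3*N+3}"
    unfolding Vs by (subst sum.union_disjoint) auto
  also have "\<dots> = 3*N / (real N + 1 + e) + (2/(2*real N + e) + 2/(real N + 1 + e))"
    using s1 degs[of N] unfolding f_def by (simp add: add_divide_distrib)
  also have "\<dots> = (3*real N+2)/(real N+1+e) + 2/(2*real N+e)" by (simp add: add_divide_distrib)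
  also have "\<dots> > 3" using ineq[of "real N" e] N1 e_def by simp
  finally show ?thesis using blow[OF N1] mind e0 by blast
qed
end
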